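(* Let $(X,* )$ be either an associative shelf or an idempotent semi-group, and suppose $X$ has a zero element $e$ (i.e. $x*e=e=e*x$ for all $x\in X$). Let $C_n=\mathbb{Z}X^{n+1}$ for $n\ge0$ with face maps $d_i:C_n\to C_{n-1}$, $0\le i\le n$, given by $$d_i(x_0,\dots,x_n)=\begin{cases}(x_0*x_1,x_2,\dots,x_{n-1},x_n*x_0) & i=0,\\ (x_n*x_0,x_1,\dots,x_{n-2},x_{n-1}*x_n) & i=n,\\ (x_0,\dots,x_{i-2},x_{i-1}*x_i,x_i*x_{i+1},x_{i+2},\dots,x_n) & 0<i<n,\end{cases}$$ and degeneracy maps $s_j:C_n\to C_{n+1}$, $0\le j\le n$, given by $s_j(x_0,\dots,x_n)=(x_0,\dots,x_{j-1},e,e,x_{j+1},\dots,x_n)$. Then $(C_n,d_i,s_j)$ is a very weak simplicial module, i.e.: (1) $d_i\circ d_j=d_{j-1}\circ d_i$ for $i<j$; (2) $s_i\circ s_j=s_{j+1}\circ s_i$ for $i\le j$; (3) $d_i\circ s_j=s_{j-1}\circ d_i$ for $i<j$, and $d_i\circ s_j=s_j\circ d_{i-1}$ for $i>j+1$ (whenever the compositions are defined).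
   Context: A shelf is a set with a binary operation $*$ satisfying $(a*b)*c=(a*c)*(b*c)$; an associative shelf is an associative shelf. An idempotent semi-group is an associative magma with $a*a=a$ for all $a$. *)

theory Defs
  imports Main "HOL-Library.Poly_Mapping"
begin

definition associative :: "('a \<Rightarrow> 'a \<Rightarrow> 'a) \<Rightarrow> bool" where
  "associative m \<longleftrightarrow> (\<forall>a b c. m (m a b) c = m a (m b c))"

definition shelf :: "('a \<Rightarrow> 'a \<Rightarrow> 'a) \<Rightarrow> bool" where
  "shelf m \<longleftrightarrow> (\<forall>a b c. m (m a b) c = m (m a c) (m b c))"

definition associative_shelf :: "('a \<Rightarrow> 'a \<Rightarrow> 'a) \<Rightarrow> bool" where
  "associative_shelf m \<longleftrightarrow> shelf m \<and> associative m"

definition idempotent_semigroup :: "('a \<Rightarrow> 'a \<Rightarrow> 'a) \<Rightarrow> bool" where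
  "idempotent_semigroup m \<longleftrightarrow> associative m \<and> (\<forall>a. m a a = a)"

definition zero_element :: "('a \<Rightarrow> 'a \<Rightarrow> 'a) \<Rightarrow> 'a \<Rightarrow> bool" where
  "zero_element m e \<longleftrightarrow> (\<forall>x. m x e = e \<and> m e x = e)"

text \<open>For n = 1 the two boundary formulas merge (cyclically) into a single entry:
  d_0(x_0,x_1) = x_0*x_1*x_0 and d_1(x_0,x_1) = x_1*x_0*x_1.
  On C_0 no face map is used; we return the empty list there.\<close>
definition face_gen :: "('a \<Rightarrow> 'a \<Rightarrow> 'a) \<Rightarrow> nat \<Rightarrow> 'a list \<Rightarrow> 'a list" where
  "face_gen m i xs =
    (let n = length xs - 1 in
     if length xs \<le> 1 then []
     else if n = 1 then
       (if i = 0 then [m (m (xs!0) (xs!1)) (xs!0)] else [m (m (xs!1) (xs!0)) (xs!1)])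
     else if i = 0 then [m (xs!0) (xs!1)] @ take (n-2) (drop 2 xs) @ [m (xs!n) (xs!0)]
     else if i = n then [m (xs!n) (xs!0)] @ take (n-2) (drop 1 xs) @ [m (xs!(n-1)) (xs!n)]
     else take (i-1) xs @ [m (xs!(i-1)) (xs!i), m (xs!i) (xs!(i+1))] @ drop (i+2) xs)"

definition degen_gen :: "'a \<Rightarrow> nat \<Rightarrow> 'a list \<Rightarrow> 'a list" where
  "degen_gen e j xs = take j xs @ [e, e] @ drop (j+1) xs"

text \<open>The chain module C_n = Z X^{n+1}: finitely supported integer combinations of
  (n+1)-tuples, i.e. the free abelian group on X^{n+1}.\<close>
definition chains :: "nat \<Rightarrow> ('a list \<Rightarrow>\<^sub>0 int) set" where
  "chains n = {c. Poly_Mapping.keys c \<subseteq> {xs. length xs = n + 1}}"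

definition face :: "('a \<Rightarrow> 'a \<Rightarrow> 'a) \<Rightarrow> nat \<Rightarrow> ('a list \<Rightarrow>\<^sub>0 int) \<Rightarrow> ('a list \<Rightarrow>\<^sub>0 int)" where
  "face m i = frag_extend (\<lambda>xs. frag_of (face_gen m i xs))"

definition degen :: "'a \<Rightarrow> nat \<Rightarrow> ('a list \<Rightarrow>\<^sub>0 int) \<Rightarrow> ('a list \<Rightarrow>\<^sub>0 int)" where
  "degen e j = frag_extend (\<lambda>xs. frag_of (degen_gen e j xs))"

end

theory Submission imports Defs begin

lemma face_len: "length xs \<ge> 3 \<Longrightarrow> i < length xs \<Longrightarrow> length (face_gen m i xs) = length xs - 1"
  by (auto simp: face_gen_def Let_def)

lemma face_nth0:
  assumes "length xs = Suc (Suc n)" "n \<ge> 1" "k \<le> n"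
  shows "face_gen m 0 xs ! k = (if k = 0 then m (xs!0) (xs!1) else if k = n then m (xs!(n+1)) (xs!0) else xs!(k+1))"
proof -
  have "face_gen m 0 xs = [m (xs!0) (xs!1)] @ take (n-1) (drop 2 xs) @ [m (xs!(n+1)) (xs!0)]"
    using assms by (simp add: face_gen_def Let_def)
  then show ?thesis using assms by (cases k) (auto simp: nth_append)
qed

lemma face_nthn:
  assumes "length xs = Suc (Suc n)" "n \<ge> 1" "k \<le> n"
  shows "face_gen m (n+1) xs ! k = (if k = 0 then m (xs!(n+1)) (xs!0) else if k = n then m (xs!n) (xs!(n+1)) else xs!k)"
proof -
  have "face_gen m (n+1) xs = [m (xs!(n+1)) (xs!0)] @ take (n-1) (drop 1 xs) @ [m (xs!n) (xs!(n+1))]"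
    using assms by (simp add: face_gen_def Let_def)
  then show ?thesis using assms by (cases k) (auto simp: nth_append)
qed

lemma face_nthi:
  assumes "length xs = Suc (Suc n)" "n \<ge> 1" "k \<le> n" "0 < i" "i \<le> n"
  shows "face_gen m i xs ! k = (if k < i - 1 then xs!k else if k = i - 1 then m (xs!(i-1)) (xs!i) else if k = i then m (xs!i) (xs!(i+1)) else xs!(k+1))"
proof -
  have "face_gen m i xs = take (i-1) xs @ [m (xs!(i-1)) (xs!i), m (xs!i) (xs!(i+1))] @ drop (i+2) xs"
    using assms by (simp add: face_gen_def Let_def)
  then show ?thesis using assms by (simp add: nth_append)
qed

lemma degen_len: "j < length xs \<Longrightarrow> length (degen_gen e j xs) = length xs + 1"
  by (auto simp: degen_gen_def)

lemma degen_nth: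
  assumes "j < length xs" "k < length xs + 1"
  shows "degen_gen e j xs ! k = (if k < j then xs!k else if k \<le> j+1 then e else xs!(k-1))"
  using assms by (auto simp: degen_gen_def nth_append min_def nth_Cons' Suc_diff_Suc numeral_2_eq_2)

lemma face_nth_N:
  assumes "length xs = N" "3 \<le> N" "k < N - 1" "i < N"
  shows "face_gen m i xs ! k =
    (if i = 0 then (if k = 0 then m (xs!0) (xs!1) else if k = N - 2 then m (xs!(N - 1)) (xs!0) else xs!(k+1))
     else if i = N - 1 then (if k = 0 then m (xs!(N - 1)) (xs!0) else if k = N - 2 then m (xs!(N - 2)) (xs!(N - 1)) else xs!k)
     else (if k < i - 1 then xs!k else if k = i - 1 then m (xs!(i-1)) (xs!i) else if k = i then m (xs!i) (xs!(i+1)) else xs!(k+1)))"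
proof -
  define n where "n = N - 2"
  have n: "N = Suc (Suc n)" "n \<ge> 1" using assms(2) unfolding n_def by arith+
  show ?thesis
  proof (cases "i = 0")
    case True then show ?thesis using face_nth0[of xs n k m] assms n by simp
  next
    case False
    show ?thesis
    proof (cases "i = N - 1")
      case True then show ?thesis using face_nthn[of xs n k m] assms n False by simp
    next
      case F2: False
      then show ?thesis using face_nthi[of xs n k i m] assms n False by simp
    qed
  qed
qed

lemmas face_nth = face_nth_N[OF refl]



definition Fn :: "('a \<Rightarrow> 'a \<Rightarrow> 'a) \<Rightarrow> nat \<Rightarrow> nat \<Rightarrow> (nat \<Rightarrow> 'a) \<Rightarrow> nat \<Rightarrow> 'a" where
  "Fn m N i x k =
    (if i = 0 then (if k = 0 then m (x 0) (x 1) else if k = N - 1 then m (x N) (x 0) else x (k+1))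
     else if i = N then (if k = 0 then m (x N) (x 0) else if k = N - 1 then m (x (N - 1)) (x N) else x k)
     else (if k < i - 1 then x k else if k = i - 1 then m (x (i-1)) (x i) else if k = i then m (x i) (x (i+1)) else x (k+1)))"

definition Dn :: "'a \<Rightarrow> nat \<Rightarrow> (nat \<Rightarrow> 'a) \<Rightarrow> nat \<Rightarrow> 'a" where
  "Dn e j x k = (if k < j then x k else if k \<le> j+1 then e else x (k-1))"

lemma face_map:
  assumes "length xs = Suc N" "2 \<le> N" "i \<le> N"
  shows "face_gen m i xs = map (Fn m N i (nth xs)) [0..<N]"
proof (rule nth_equalityI)
  show "length (face_gen m i xs) = length (map (Fn m N i (nth xs)) [0..<N])"
    using assms by (simp add: face_len)
  fix k assume "k < length (face_gen m i xs)"
  hence k: "k < N" using assms by (simp add: face_len)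
  show "face_gen m i xs ! k = map (Fn m N i (nth xs)) [0..<N] ! k"
    using assms k by (simp add: face_nth Fn_def del: upt_Suc)
qed

lemma degen_map:
  assumes "length xs = Suc N" "j \<le> N"
  shows "degen_gen e j xs = map (Dn e j (nth xs)) [0..<N+2]"
proof (rule nth_equalityI)
  show "length (degen_gen e j xs) = length (map (Dn e j (nth xs)) [0..<N+2])"
    using assms by (simp add: degen_len)
  fix k assume "k < length (degen_gen e j xs)"
  hence k: "k < N + 2" using assms by (simp add: degen_len)
  show "degen_gen e j xs ! k = map (Dn e j (nth xs)) [0..<N+2] ! k"
    using assms k by (simp add: degen_nth Dn_def del: upt_Suc)
qed

lemma Fn_cong: "(\<And>t. t \<le> N \<Longrightarrow> f t = g t) \<Longrightarrow> k < N \<Longrightarrow> Fn m N i f k = Fn m N i g k"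
  unfolding Fn_def by auto

lemma Dn_cong: "(\<And>t. t \<le> N \<Longrightarrow> f t = g t) \<Longrightarrow> j \<le> N + 1 \<Longrightarrow> k < N + 2 \<Longrightarrow> Dn e j f k = Dn e j g k"
  unfolding Dn_def by auto

lemma face_map_map:
  assumes "2 \<le> N" "i \<le> N"
  shows "face_gen m i (map g [0..<Suc N]) = map (Fn m N i g) [0..<N]"
proof -
  have "face_gen m i (map g [0..<Suc N]) = map (Fn m N i (nth (map g [0..<Suc N]))) [0..<N]"
    using assms by (intro face_map) auto
  also have "\<dots> = map (Fn m N i g) [0..<N]"
    by (rule map_cong[OF refl], rule Fn_cong) (auto simp del: upt_Suc)
  finally show ?thesis .
qed

lemma degen_map_map:
  assumes "j \<le> N"
  shows "degen_gen e j (map g [0..<Suc N]) = map (Dn e j g) [0..<N+2]"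
proof -
  have "degen_gen e j (map g [0..<Suc N]) = map (Dn e j (nth (map g [0..<Suc N]))) [0..<N+2]"
    using assms by (intro degen_map) auto
  also have "\<dots> = map (Dn e j g) [0..<N+2]"
    using assms by (intro map_cong[OF refl] Dn_cong) (auto simp del: upt_Suc)
  finally show ?thesis .
qed



lemma Fn0: "Fn m N 0 x k = (if k = 0 then m (x 0) (x 1) else if k = N - 1 then m (x N) (x 0) else x (k+1))"
  by (simp add: Fn_def)
lemma FnN: "0 < N \<Longrightarrow> Fn m N N x k = (if k = 0 then m (x N) (x 0) else if k = N - 1 then m (x (N - 1)) (x N) else x k)"
  by (simp add: Fn_def)
lemma FnM: "0 < i \<Longrightarrow> i < N \<Longrightarrow> Fn m N i x k = (if k < i - 1 then x k else if k = i - 1 then m (x (i-1)) (x i) else if k = i then m (x i) (x (i+1)) else x (k+1))"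
  by (simp add: Fn_def)

locale alg =
  fixes m :: "'a \<Rightarrow> 'a \<Rightarrow> 'a" and e :: 'a
  assumes A: "m (m a b) c = m a (m b c)"
  and B: "m a (m b (m b c)) = m a (m b c)"
  and Z1: "m x e = e" and Z2: "m e x = e"
begin

lemma c1: "k < Suc (Suc p) \<Longrightarrow>
  Fn m (Suc (Suc p)) 0 (Fn m (Suc (Suc (Suc p))) (Suc (Suc (Suc p))) x) k = Fn m (Suc (Suc p)) (Suc (Suc p)) (Fn m (Suc (Suc (Suc p))) 0 x) k"
  apply (simp add: Fn0 FnN FnM)
  apply (simp add: A B)
  done

lemma c2: "k < Suc (Suc p) \<Longrightarrow>
  Fn m (Suc (Suc p)) 0 (Fn m (Suc (Suc (Suc p))) 1 x) k = Fn m (Suc (Suc p)) 0 (Fn m (Suc (Suc (Suc p))) 0 x) k"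
  apply (simp add: Fn0 FnN FnM)
  apply (simp add: A B)
  done

lemma c3: "Suc q < Suc (Suc p) \<Longrightarrow> k < Suc (Suc p) \<Longrightarrow>
  Fn m (Suc (Suc p)) 0 (Fn m (Suc (Suc (Suc p))) (Suc (Suc q)) x) k = Fn m (Suc (Suc p)) (Suc q) (Fn m (Suc (Suc (Suc p))) 0 x) k"
  apply (simp add: Fn0 FnN FnM)
  apply (simp add: A B)
  done

lemma c4: "k < Suc (Suc p) \<Longrightarrow>
  Fn m (Suc (Suc p)) (Suc (Suc p)) (Fn m (Suc (Suc (Suc p))) (Suc (Suc (Suc p))) x) k = Fn m (Suc (Suc p)) (Suc (Suc p)) (Fn m (Suc (Suc (Suc p))) (Suc (Suc p)) x) k"
  apply (simp add: Fn0 FnN FnM)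
  apply (simp add: A B)
  done

lemma c5: "q < Suc p \<Longrightarrow> k < Suc (Suc p) \<Longrightarrow>
  Fn m (Suc (Suc p)) (Suc q) (Fn m (Suc (Suc (Suc p))) (Suc (Suc (Suc p))) x) k = Fn m (Suc (Suc p)) (Suc (Suc p)) (Fn m (Suc (Suc (Suc p))) (Suc q) x) k"
  apply (simp add: Fn0 FnN FnM)
  apply (simp add: A B)
  done

lemma c6: "q \<le> r \<Longrightarrow> r < Suc p \<Longrightarrow> k < Suc (Suc p) \<Longrightarrow>
  Fn m (Suc (Suc p)) (Suc q) (Fn m (Suc (Suc (Suc p))) (Suc (Suc r)) x) k = Fn m (Suc (Suc p)) (Suc r) (Fn m (Suc (Suc (Suc p))) (Suc q) x) k"
  apply (simp add: Fn0 FnN FnM)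
  apply (simp add: A B)
  done

lemma pt1: "n = Suc (Suc (Suc p)) \<Longrightarrow> i < j \<Longrightarrow> j \<le> n \<Longrightarrow> k < n - 1 \<Longrightarrow>
   Fn m (n-1) i (Fn m n j x) k = Fn m (n-1) (j-1) (Fn m n i x) k"
proof -
  assume h: "n = Suc (Suc (Suc p))" "i < j" "j \<le> n" "k < n - 1"
  have k: "k < Suc (Suc p)" using h by simp
  define N where "N = Suc (Suc (Suc p))"
  have hN: "n = N" using h N_def by simp
  consider "i = 0" "j = N" | "i = 0" "j = 1" | q where "i = 0" "j = Suc (Suc q)" "Suc q < Suc (Suc p)"
     | "i = Suc (Suc p)" "j = N" | q where "i = Suc q" "j = N" "q < Suc p"
     | q r where "i = Suc q" "j = Suc (Suc r)" "q \<le> r" "r < Suc p"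
  proof (cases "i = 0")
    case True
    show thesis
    proof (cases "j = N")
      case False
      show thesis
      proof (cases "j = 1")
        case False
        define q where "q = j - 2"
        have jq: "j = Suc (Suc q)" unfolding q_def using h \<open>i = 0\<close> False by arith
        have "Suc q < Suc (Suc p)" using jq h \<open>j \<noteq> N\<close> hN N_def by arith
        then show thesis using that(3) True jq by blast
      qed (use that True in auto)
    qed (use that True in auto)
  next
    case False
    define q where "q = i - 1"
    have q: "i = Suc q" unfolding q_def using False by arith
    show thesis
    proof (cases "j = N")
      case True
      show thesis
      proof (cases "q = Suc p")
        case True then show thesis using that(4) q \<open>j = N\<close> by blast
      next
        case False
        have "q < Suc p" using False q h hN N_def \<open>j = N\<close> by arith
        then show thesis using that(5) q \<open>j = N\<close> by blast
      qed
    next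
      case False
      define r where "r = j - 2"
      have jr: "j = Suc (Suc r)" unfolding r_def using h q by arith
      have "q \<le> r" "r < Suc p" using jr q h hN N_def False by arith+
      then show thesis using that(6) q jr by blast
    qed
  qed
  then show ?thesis
  proof cases
    case 1 then show ?thesis using h c1[OF k] N_def by simp
  next
    case 2 then show ?thesis using h c2[OF k] by simp
  next
    case 3 then show ?thesis using h c3[OF _ k] by simp
  next
    case 4
    have j: "j = Suc (Suc (Suc p))" using 4 N_def by simp
    show ?thesis unfolding j 4(1) h(1) using c4[OF k] by simp
  next
    case 5 then show ?thesis using h c5[OF _ k] N_def by simp
  next
    case 6 then show ?thesis using h c6[OF _ _ k] by simp
  qed
qed

lemma pt3: "2 \<le> n \<Longrightarrow> i < j \<Longrightarrow> j \<le> n \<Longrightarrow> k < n + 1 \<Longrightarrow>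
   Fn m (n+1) i (Dn e j x) k = Dn e (j-1) (Fn m n i x) k"
  by (cases "i = 0"; simp add: Fn0 FnM Dn_def Z1 Z2; (safe; linarith))

lemma pt4: "2 \<le> n \<Longrightarrow> j + 1 < i \<Longrightarrow> i \<le> n + 1 \<Longrightarrow> k < n + 1 \<Longrightarrow>
   Fn m (n+1) i (Dn e j x) k = Dn e j (Fn m n (i-1) x) k"
  by (cases "i = n + 1"; simp add: FnN FnM Dn_def Z1 Z2; (safe; linarith))

lemma pt2: "i \<le> j \<Longrightarrow> Dn e i (Dn e j x) k = Dn e (j+1) (Dn e i x) k"
  unfolding Dn_def by auto


lemma G1:
  assumes len: "length xs = Suc n" and "2 \<le> n" "i < j" "j \<le> n"
  shows "face_gen m i (face_gen m j xs) = face_gen m (j - 1) (face_gen m i xs)"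
proof (cases "n = 2")
  case True
  then obtain a b c where xs: "xs = [a,b,c]" using len by (auto simp: length_Suc_conv numeral_2_eq_2)
  have "(i = 0 \<and> j = 1) \<or> (i = 0 \<and> j = 2) \<or> (i = 1 \<and> j = 2)" using assms True by arith
  then show ?thesis using xs apply (elim disjE conjE) apply (simp_all add: face_gen_def Let_def) apply (simp_all add: A B) done
next
  case False
  define p where "p = n - 3"
  have np: "n = Suc (Suc (Suc p))" using False assms unfolding p_def by arith
  have L: "face_gen m i (face_gen m j xs) = map (Fn m (n-1) i (Fn m n j (nth xs))) [0..<n-1]"
  proof -
    have "face_gen m j xs = map (Fn m n j (nth xs)) [0..<Suc (n-1)]"
      using face_map[OF len] assms np by simp
    then show ?thesis using face_map_map[of "n-1" i m] assms np by simp
  qed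
  have R: "face_gen m (j-1) (face_gen m i xs) = map (Fn m (n-1) (j-1) (Fn m n i (nth xs))) [0..<n-1]"
  proof -
    have "face_gen m i xs = map (Fn m n i (nth xs)) [0..<Suc (n-1)]"
      using face_map[OF len] assms np by simp
    then show ?thesis using face_map_map[of "n-1" "j-1" m] assms np by simp
  qed
  show ?thesis unfolding L R
    by (rule map_cong[OF refl], rule pt1[OF np]) (use assms in auto)
qed

lemma G2:
  assumes len: "length xs = Suc n" and "i \<le> j" "j \<le> n"
  shows "degen_gen e i (degen_gen e j xs) = degen_gen e (j + 1) (degen_gen e i xs)"
proof -
  have "degen_gen e i (degen_gen e j xs) = map (Dn e i (Dn e j (nth xs))) [0..<n+1+2]"
  proof -
    have "degen_gen e j xs = map (Dn e j (nth xs)) [0..<Suc (n+1)]"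
      using degen_map[OF len] assms by simp
    then show ?thesis using degen_map_map[of i "n+1" e] assms by simp
  qed
  moreover have "degen_gen e (j+1) (degen_gen e i xs) = map (Dn e (j+1) (Dn e i (nth xs))) [0..<n+1+2]"
  proof -
    have "degen_gen e i xs = map (Dn e i (nth xs)) [0..<Suc (n+1)]"
      using degen_map[OF len] assms by simp
    then show ?thesis using degen_map_map[of "j+1" "n+1" e] assms by simp
  qed
  ultimately show ?thesis using assms by (simp add: pt2)
qed

lemma G3:
  assumes len: "length xs = Suc n" and "i < j" "j \<le> n"
  shows "face_gen m i (degen_gen e j xs) = degen_gen e (j - 1) (face_gen m i xs)"
proof (cases "n = 1")
  case True
  then obtain a b where xs: "xs = [a,b]" using len by (auto simp: length_Suc_conv)
  have "i = 0" "j = 1" using assms True by auto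
  then show ?thesis using xs by (simp add: face_gen_def degen_gen_def Let_def Z1 Z2)
next
  case False
  define p where "p = n - 2"
  have np: "n = Suc (Suc p)" using False assms unfolding p_def by arith
  have L: "face_gen m i (degen_gen e j xs) = map (Fn m (n+1) i (Dn e j (nth xs))) [0..<n+1]"
  proof -
    have "degen_gen e j xs = map (Dn e j (nth xs)) [0..<Suc (n+1)]"
      using degen_map[OF len] assms by simp
    then show ?thesis using face_map_map[of "n+1" i m] assms np by simp
  qed
  have R: "degen_gen e (j-1) (face_gen m i xs) = map (Dn e (j-1) (Fn m n i (nth xs))) [0..<n+1]"
  proof -
    have "face_gen m i xs = map (Fn m n i (nth xs)) [0..<Suc (n-1)]"
      using face_map[OF len] assms np by simp
    then show ?thesis using degen_map_map[of "j-1" "n-1" e] assms np by simp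
  qed
  show ?thesis unfolding L R
    by (rule map_cong[OF refl], rule pt3) (use assms np in auto)
qed

lemma G4:
  assumes len: "length xs = Suc n" and "j + 1 < i" "i \<le> n + 1"
  shows "face_gen m i (degen_gen e j xs) = degen_gen e j (face_gen m (i - 1) xs)"
proof (cases "n = 1")
  case True
  then obtain a b where xs: "xs = [a,b]" using len by (auto simp: length_Suc_conv)
  have "i = 2" "j = 0" using assms True by auto
  then show ?thesis using xs by (simp add: face_gen_def degen_gen_def Let_def Z1 Z2)
next
  case False
  have n2: "2 \<le> n" using False assms by arith
  have L: "face_gen m i (degen_gen e j xs) = map (Fn m (n+1) i (Dn e j (nth xs))) [0..<n+1]"
  proof -
    have "degen_gen e j xs = map (Dn e j (nth xs)) [0..<Suc (n+1)]"
      using degen_map[OF len] assms by simp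
    then show ?thesis using face_map_map[of "n+1" i m] assms n2 by simp
  qed
  have R: "degen_gen e j (face_gen m (i-1) xs) = map (Dn e j (Fn m n (i-1) (nth xs))) [0..<n+1]"
  proof -
    have "face_gen m (i-1) xs = map (Fn m n (i-1) (nth xs)) [0..<Suc (n-1)]"
      using face_map[OF len] assms n2 by simp
    then show ?thesis using degen_map_map[of j "n-1" e] assms n2 by simp
  qed
  show ?thesis unfolding L R
    by (rule map_cong[OF refl], rule pt4) (use assms n2 in auto)
qed

end

lemma fe_comp:
  "frag_extend (\<lambda>xs. frag_of (f xs)) (frag_extend (\<lambda>xs. frag_of (g xs)) c) = frag_extend (\<lambda>xs. frag_of (f (g xs))) c"
  using frag_extend_compose[of "\<lambda>xs. frag_of (f xs)" g c] by (simp add: comp_def)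

lemma chains_len: "c \<in> chains n \<Longrightarrow> xs \<in> Poly_Mapping.keys c \<Longrightarrow> length xs = Suc n"
  unfolding chains_def by auto

lemma alg_of:
  fixes m :: "'a \<Rightarrow> 'a \<Rightarrow> 'a" and e :: 'a
  assumes struct: "associative_shelf m \<or> idempotent_semigroup m"
    and zero: "zero_element m e"
  shows "alg m e"
proof
  have A: "\<And>a b c. m (m a b) c = m a (m b c)"
    using struct unfolding associative_shelf_def idempotent_semigroup_def associative_def by blast
  show "\<And>a b c. m (m a b) c = m a (m b c)" by (rule A)
  show "\<And>a b c. m a (m b (m b c)) = m a (m b c)"
  proof -
    fix a b c
    show "m a (m b (m b c)) = m a (m b c)"
    proof (cases "idempotent_semigroup m")
      case True
      then have "m b b = b" unfolding idempotent_semigroup_def by blast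
      then show ?thesis by (metis A)
    next
      case False
      then have S: "\<And>a b c. m (m a b) c = m (m a c) (m b c)"
        using struct unfolding associative_shelf_def shelf_def by blast
      show ?thesis by (metis A S)
    qed
  qed
  show "\<And>x. m x e = e" "\<And>x. m e x = e" using zero unfolding zero_element_def by auto
qed

theorem proposition1p5:
  fixes m :: "'a \<Rightarrow> 'a \<Rightarrow> 'a" and e :: 'a
  assumes struct: "associative_shelf m \<or> idempotent_semigroup m"
    and zero: "zero_element m e"
  shows "(\<forall>n i j c. c \<in> chains n \<and> 2 \<le> n \<and> i < j \<and> j \<le> n \<longrightarrow>
            face m i (face m j c) = face m (j - 1) (face m i c))
       \<and> (\<forall>n i j c. c \<in> chains n \<and> i \<le> j \<and> j \<le> n \<longrightarrow>
            degen e i (degen e j c) = degen e (j + 1) (degen e i c))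
       \<and> (\<forall>n i j c. c \<in> chains n \<and> i < j \<and> j \<le> n \<longrightarrow>
            face m i (degen e j c) = degen e (j - 1) (face m i c))
       \<and> (\<forall>n i j c. c \<in> chains n \<and> j + 1 < i \<and> i \<le> n + 1 \<longrightarrow>
            face m i (degen e j c) = degen e j (face m (i - 1) c))"
proof -
  interpret alg m e using alg_of[OF struct zero] .
  show ?thesis
    unfolding face_def degen_def fe_comp
  proof (intro conjI allI impI; elim conjE)
    fix n i j and c :: "'a list \<Rightarrow>\<^sub>0 int"
    assume "c \<in> chains n" "2 \<le> n" "i < j" "j \<le> n"
    then show "frag_extend (\<lambda>xs. frag_of (face_gen m i (face_gen m j xs))) c =
           frag_extend (\<lambda>xs. frag_of (face_gen m (j - 1) (face_gen m i xs))) c"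
      by (intro frag_extend_eq) (simp add: G1 chains_len)
  next
    fix n i j and c :: "'a list \<Rightarrow>\<^sub>0 int"
    assume "c \<in> chains n" "i \<le> j" "j \<le> n"
    then show "frag_extend (\<lambda>xs. frag_of (degen_gen e i (degen_gen e j xs))) c =
           frag_extend (\<lambda>xs. frag_of (degen_gen e (j + 1) (degen_gen e i xs))) c"
      by (intro frag_extend_eq) (simp add: G2 chains_len)
  next
    fix n i j and c :: "'a list \<Rightarrow>\<^sub>0 int"
    assume "c \<in> chains n" "i < j" "j \<le> n"
    then show "frag_extend (\<lambda>xs. frag_of (face_gen m i (degen_gen e j xs))) c =
           frag_extend (\<lambda>xs. frag_of (degen_gen e (j - 1) (face_gen m i xs))) c"
      by (intro frag_extend_eq) (simp add: G3 chains_len)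
  next
    fix n i j and c :: "'a list \<Rightarrow>\<^sub>0 int"
    assume "c \<in> chains n" "j + 1 < i" "i \<le> n + 1"
    then show "frag_extend (\<lambda>xs. frag_of (face_gen m i (degen_gen e j xs))) c =
           frag_extend (\<lambda>xs. frag_of (degen_gen e j (face_gen m (i - 1) xs))) c"
      by (intro frag_extend_eq) (simp add: G4 chains_len)
  qed
qed

end
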